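(* In the construction described in the context, $\sum_{i=1}^{t-1}p_G(C_i)\ge\Delta$.
   Context: The profit of $D\subseteq E$ is $p_G(D)=\mathrm{MST}(G\setminus D)-\mathrm{MST}(G)$, where $\mathrm{MST}(H)$ is the minimum spanning tree weight of $H$ w.r.t. $w$ and $\mathrm{MST}(H)=\infty$ if $H$ is disconnected. Setting: $G=(V,E)$ is a connected finite undirected graph (parallel edges allowed), $w:E\to\mathbb{R}_{\ge0}$ edge weights, $c:E\to\mathbb{R}_{>0}$ edge costs, $n=|V|$. For $S\subseteq V$, $C_G(S)=\{e\in E:|e\cap S|=1\}$ (complete cut; its edges cross it) and $C_G(S,W)=\{e\in C_G(S):w(e)<W\}$ (partial cut). $F\subseteq E$ is a set with $G'=G\setminus F=(V,E\setminus F)$ connected; $B=c(F)$ and $\Delta=\mathrm{MST}(G')-\mathrm{MST}(G)$. Construction: let $T$ be a minimum spanning tree of $G$ and $T\cap F=\{e_1,\dots,e_{t-1}\}$, with $t\ge2$. Removing these edges splits $T$ into components with vertex sets $A_1,\dots,A_t$ (a partition of $V$). Let $G'_{cc}$ be the multigraph with vertex set $V_{cc}=\{A_1,\dots,A_t\}$ having, for every edge $\{u,v\}\in E\setminus F$ with $u\in A_i$, $v\in A_j$, an edge between $A_i$ and $A_j$ of weight $w(\{u,v\})$ (identified with the original edge). Let $T'_{cc}$ be a minimum spanning tree of $G'_{cc}$, with edges $e'_1,\dots,e'_{t-1}$ indexed so that $w(e'_1)\le\dots\le w(e'_{t-1})$ (ties broken arbitrarily). For each $i$, deleting $e'_i,e'_{i+1},\dots,e'_{t-1}$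 from $T'_{cc}$ leaves a forest in which $e'_i$ joins two components $L_i,R_i\subseteq V_{cc}$. Counters $k(A)=0$ for all $A\in V_{cc}$ initially, and $k(S)=\max_{A\in S}k(A)$. For $i=1,\dots,t-1$ in order: set $X_i=L_i$ if $k(L_i)\le k(R_i)$, else $X_i=R_i$; then increase $k(A)$ by $1$ for every $A\in X_i$. Identifying a set of vertices of $G'_{cc}$ with the union of the corresponding vertex sets in $V$, define $C_i=C_G(X_i,w(e'_i))$. *)

theory Defs
  imports "HOL-Library.Extended_Real"
begin

text \<open>Multigraphs: vertex set V, edge set E (abstract edge identities, so parallel
edges are allowed), and an endpoint map ends :: 'e => 'v set.\<close>

definition adj :: "('e \<Rightarrow> 'v set) \<Rightarrow> 'e set \<Rightarrow> ('v \<times> 'v) set" where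
  "adj ends D = {(u,v). \<exists>e\<in>D. ends e = {u,v}}"

definition gconnected :: "'v set \<Rightarrow> ('e \<Rightarrow> 'v set) \<Rightarrow> 'e set \<Rightarrow> bool" where
  "gconnected V ends D \<longleftrightarrow> (\<forall>u\<in>V. \<forall>v\<in>V. (u,v) \<in> (adj ends D)\<^sup>*)"

definition gforest :: "('e \<Rightarrow> 'v set) \<Rightarrow> 'e set \<Rightarrow> bool" where
  "gforest ends T \<longleftrightarrow> (\<forall>e\<in>T. \<forall>u v. ends e = {u,v} \<longrightarrow> (u,v) \<notin> (adj ends (T - {e}))\<^sup>*)"

definition spanning_tree :: "'v set \<Rightarrow> ('e \<Rightarrow> 'v set) \<Rightarrow> 'e set \<Rightarrow> 'e set \<Rightarrow> bool" where
  "spanning_tree V ends D T \<longleftrightarrow> T \<subseteq> D \<and> gconnected V ends T \<and> gforest ends T"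

text \<open>Minimum spanning tree weight of (V, D); equals \<infinity> if (V, D) is disconnected
(no spanning tree exists, Inf of the empty set is \<infinity>).\<close>
definition mst :: "'v set \<Rightarrow> ('e \<Rightarrow> 'v set) \<Rightarrow> ('e \<Rightarrow> real) \<Rightarrow> 'e set \<Rightarrow> ereal" where
  "mst V ends w D = (INF T \<in> {T. spanning_tree V ends D T}. ereal (sum w T))"

definition profit :: "'v set \<Rightarrow> ('e \<Rightarrow> 'v set) \<Rightarrow> ('e \<Rightarrow> real) \<Rightarrow> 'e set \<Rightarrow> 'e set \<Rightarrow> ereal" where
  "profit V ends w E D = mst V ends w (E - D) - mst V ends w E"

definition partial_cut :: "('e \<Rightarrow> 'v set) \<Rightarrow> ('e \<Rightarrow> real) \<Rightarrow> 'e set \<Rightarrow> 'v set \<Rightarrow> real \<Rightarrow> 'e set" where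
  "partial_cut ends w E S W = {e \<in> E. card (ends e \<inter> S) = 1 \<and> w e < W}"

definition comp_of :: "'v set \<Rightarrow> ('e \<Rightarrow> 'v set) \<Rightarrow> 'e set \<Rightarrow> 'v \<Rightarrow> 'v set" where
  "comp_of V ends D x = {v \<in> V. (x,v) \<in> (adj ends D)\<^sup>*}"

definition setmax :: "('c \<Rightarrow> nat) \<Rightarrow> 'c set \<Rightarrow> nat" where
  "setmax k S = Max (k ` S)"

fun kcnt :: "(nat \<Rightarrow> 'c set) \<Rightarrow> (nat \<Rightarrow> 'c set) \<Rightarrow> nat \<Rightarrow> 'c \<Rightarrow> nat" where
  "kcnt L R 0 = (\<lambda>_. 0)"
| "kcnt L R (Suc i) =
     (let k = kcnt L R i;
          X = (if setmax k (L (Suc i)) \<le> setmax k (R (Suc i)) then L (Suc i) else R (Suc i))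
      in (\<lambda>A. k A + (if A \<in> X then 1 else 0)))"

definition Xsel :: "(nat \<Rightarrow> 'c set) \<Rightarrow> (nat \<Rightarrow> 'c set) \<Rightarrow> nat \<Rightarrow> 'c set" where
  "Xsel L R i = (let k = kcnt L R (i - 1) in
                   if setmax k (L i) \<le> setmax k (R i) then L i else R i)"

end

theory Submission
  imports Defs
begin


definition crosses :: "('e \<Rightarrow> 'v set) \<Rightarrow> 'e \<Rightarrow> 'v set \<Rightarrow> bool" where
  "crosses en g S \<longleftrightarrow> (\<exists>c d. en g = {c,d} \<and> c \<in> S \<and> d \<notin> S)"

lemma adj_sym: "(u,v) \<in> adj en D \<Longrightarrow> (v,u) \<in> adj en D"
  unfolding adj_def by (auto simp: doubleton_eq_iff)

lemma rt_sym: "(u,v) \<in> (adj en D)\<^sup>* \<Longrightarrow> (v,u) \<in> (adj en D)\<^sup>*"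
proof (induction rule: rtrancl_induct)
  case base then show ?case by simp
next
  case (step y z) then show ?case by (meson adj_sym converse_rtrancl_into_rtrancl)
qed

lemma adj_mono: "D \<subseteq> D' \<Longrightarrow> adj en D \<subseteq> adj en D'"
  unfolding adj_def by auto

lemma rt_mono: "D \<subseteq> D' \<Longrightarrow> (u,v) \<in> (adj en D)\<^sup>* \<Longrightarrow> (u,v) \<in> (adj en D')\<^sup>*"
  using rtrancl_mono[OF adj_mono] by blast

lemma adjI: "e \<in> D \<Longrightarrow> en e = {u,v} \<Longrightarrow> (u,v) \<in> adj en D"
  unfolding adj_def by auto

lemma removal:
  assumes "(x,z) \<in> (adj en M)\<^sup>*" "en g = {c,d}"
  shows "(x,z) \<in> (adj en (M-{g}))\<^sup>* \<or> (c,z) \<in> (adj en (M-{g}))\<^sup>* \<or> (d,z) \<in> (adj en (M-{g}))\<^sup>*"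
  using assms(1)
proof (induction rule: rtrancl_induct)
  case base then show ?case by simp
next
  case (step y z)
  from step.hyps(2) obtain e where e: "e \<in> M" "en e = {y,z}" unfolding adj_def by auto
  show ?case
  proof (cases "e = g")
    case True
    then have "z \<in> {c,d}" using e assms(2) by auto
    then show ?thesis by auto
  next
    case False
    then have "(y,z) \<in> adj en (M-{g})" using e by (auto intro: adjI)
    then show ?thesis using step.IH by (meson rtrancl.rtrancl_into_rtrancl)
  qed
qed

lemma out_stay:
  assumes "(a,z) \<in> (adj en {e\<in>M. en e \<inter> K = {}})\<^sup>*" "a \<notin> K" shows "z \<notin> K"
  using assms by (induction rule: rtrancl_induct) (auto simp: adj_def)

lemma noS_stay:
  assumes "(b,z) \<in> (adj en {e\<in>M. \<not> crosses en e S})\<^sup>*" "b \<notin> S" shows "z \<notin> S"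
  using assms
proof (induction rule: rtrancl_induct)
  case base then show ?case by simp
next
  case (step y z)
  then obtain e where e: "e \<in> M" "\<not> crosses en e S" "en e = {y,z}" unfolding adj_def by auto
  show ?case
  proof
    assume "z \<in> S"
    then have "crosses en e S" unfolding crosses_def using e(3) step.IH step.prems
      by (intro exI[of _ z] exI[of _ y]) (auto simp: doubleton_eq_iff)
    then show False using e(2) by simp
  qed
qed

lemma first_entry:
  assumes "(a,z) \<in> (adj en M)\<^sup>*" "a \<notin> K"
  shows "(a,z) \<in> (adj en {e\<in>M. en e \<inter> K = {}})\<^sup>* \<or>
    (\<exists>g\<in>M. \<exists>c d. en g = {c,d} \<and> c \<in> K \<and> d \<notin> K \<and> (a,d) \<in> (adj en {e\<in>M. en e \<inter> K = {}})\<^sup>*)"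
  using assms(1)
proof (induction rule: rtrancl_induct)
  case base then show ?case by simp
next
  case (step y z)
  from step.hyps(2) obtain e where e: "e \<in> M" "en e = {y,z}" unfolding adj_def by auto
  show ?case
  proof (cases "(a,y) \<in> (adj en {e\<in>M. en e \<inter> K = {}})\<^sup>*")
    case True
    note ay = True
    have yK: "y \<notin> K" using out_stay[OF True assms(2)] .
    show ?thesis
    proof (cases "z \<in> K")
      case True
      have "en e = {z,y}" using e(2) by auto
      have "\<exists>g\<in>M. \<exists>c d. en g = {c,d} \<and> c \<in> K \<and> d \<notin> K \<and> (a,d) \<in> (adj en {e\<in>M. en e \<inter> K = {}})\<^sup>*"
        apply (rule bexI[OF _ e(1)])
        apply (rule exI[of _ z], rule exI[of _ y])
        using \<open>en e = {z,y}\<close> yK True ay by simp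
      then show ?thesis by (rule disjI2)
    next
      case False
      have "e \<in> {e\<in>M. en e \<inter> K = {}}" using e yK False by auto
      then have "(y,z) \<in> adj en {e\<in>M. en e \<inter> K = {}}" using e(2) by (rule adjI)
      then show ?thesis using ay by (meson rtrancl.rtrancl_into_rtrancl)
    qed
  next
    case False
    then have "\<exists>g\<in>M. \<exists>c d. en g = {c,d} \<and> c \<in> K \<and> d \<notin> K \<and> (a,d) \<in> (adj en {e\<in>M. en e \<inter> K = {}})\<^sup>*"
      using step.IH by simp
    then show ?thesis by (rule disjI2)
  qed
qed

lemma crosses_card: "crosses en g S \<Longrightarrow> card (en g \<inter> S) = 1"
  unfolding crosses_def by (auto simp: Int_insert_left)

lemma exchange:
  assumes conn: "\<forall>u\<in>U. \<forall>v\<in>U. (u,v) \<in> (adj en M)\<^sup>*" and ab: "a \<in> U" "b \<in> U" "a \<in> S" "b \<notin> S"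
  shows "\<exists>g\<in>M. crosses en g S \<and> (\<forall>z\<in>U. (a,z) \<in> (adj en (M-{g}))\<^sup>* \<or> (b,z) \<in> (adj en (M-{g}))\<^sup>*)"
proof -
  define N where "N = {e\<in>M. \<not> crosses en e S}"
  define K where "K = {z. (b,z) \<in> (adj en N)\<^sup>*}"
  have KS: "z \<notin> S" if "z \<in> K" for z
  proof -
    have "(b,z) \<in> (adj en {e\<in>M. \<not> crosses en e S})\<^sup>*" using that unfolding K_def N_def by simp
    from noS_stay[OF this ab(4)] show ?thesis .
  qed
  have aK: "a \<notin> K" using KS ab(3) by blast
  have bK: "b \<in> K" unfolding K_def by simp
  have abM: "(a,b) \<in> (adj en M)\<^sup>*" using conn ab(1,2) by blast
  have "\<exists>g\<in>M. \<exists>c d. en g = {c,d} \<and> c \<in> K \<and> d \<notin> K \<and> (a,d) \<in> (adj en {e\<in>M. en e \<inter> K = {}})\<^sup>*"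
  proof (cases "(a,b) \<in> (adj en {e\<in>M. en e \<inter> K = {}})\<^sup>*")
    case True
    from out_stay[OF True aK] bK show ?thesis by simp
  next
    case False
    then show ?thesis using first_entry[OF abM aK] by simp
  qed
  then obtain g c d where
    g: "g\<in>M" "en g = {c,d}" "c\<in>K" "d\<notin>K" "(a,d) \<in> (adj en {e\<in>M. en e \<inter> K = {}})\<^sup>*"
    by blast
  have cS: "c \<notin> S" using KS g(3) .
  have dS: "d \<in> S"
  proof (rule ccontr)
    assume dn: "d \<notin> S"
    have "\<not> crosses en g S"
    proof
      assume "crosses en g S"
      then obtain c' d' where "en g = {c',d'}" "c' \<in> S" "d' \<notin> S" unfolding crosses_def by blast
      then have "c' \<in> {c,d}" using g(2) by simp
      then show False using cS dn \<open>c' \<in> S\<close> by blast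
    qed
    then have "g \<in> N" using g(1) N_def by simp
    then have "(c,d) \<in> adj en N" using g(2) by (rule adjI)
    then have "(b,d) \<in> (adj en N)\<^sup>*" using g(3) unfolding K_def
      by (simp add: rtrancl.rtrancl_into_rtrancl)
    then have "d \<in> K" unfolding K_def by simp
    then show False using g(4) by simp
  qed
  have gdc: "en g = {d,c}" using g(2) by auto
  have cr: "crosses en g S" unfolding crosses_def
    apply (rule exI[of _ d], rule exI[of _ c]) using gdc cS dS by simp
  have sub1: "{e\<in>M. en e \<inter> K = {}} \<subseteq> M - {g}" using g(2,3) by auto
  have ad: "(a,d) \<in> (adj en (M-{g}))\<^sup>*" using rt_mono[OF sub1 g(5)] .
  have sub2: "N \<subseteq> M - {g}" using cr N_def by auto
  have "(b,c) \<in> (adj en N)\<^sup>*" using g(3) unfolding K_def by simp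
  then have bc: "(b,c) \<in> (adj en (M-{g}))\<^sup>*" by (rule rt_mono[OF sub2])
  show ?thesis
  proof (intro bexI[OF _ g(1)] conjI ballI)
    show "crosses en g S" by fact
    fix z assume "z \<in> U"
    then have "(b,z) \<in> (adj en M)\<^sup>*" using conn ab by blast
    from removal[OF this g(2)]
    show "(a,z) \<in> (adj en (M-{g}))\<^sup>* \<or> (b,z) \<in> (adj en (M-{g}))\<^sup>*"
      using ad bc by (meson rtrancl_trans)
  qed
qed



lemma mst_le:
  assumes fin: "finite D" and DE: "D \<subseteq> E'" and conn: "gconnected V en D" and wp: "\<forall>e\<in>D. w e \<ge> 0"
  shows "mst V en w E' \<le> ereal (sum w D)"
proof -
  define C where "C = {D'. D' \<subseteq> D \<and> gconnected V en D'}"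
  have "D \<in> C" using conn C_def by simp
  then obtain D0 where D0: "D0 \<in> C" "\<forall>D'. D' \<in> C \<longrightarrow> card D0 \<le> card D'"
    using ex_has_least_nat[of "\<lambda>X. X \<in> C" D card] by blast
  have D0D: "D0 \<subseteq> D" and D0c: "gconnected V en D0" using D0(1) C_def by auto
  have finD0: "finite D0" using D0D fin finite_subset by blast
  have forest: "gforest en D0"
    unfolding gforest_def
  proof (intro ballI allI impI)
    fix e u v assume e: "e \<in> D0" "en e = {u,v}"
    show "(u,v) \<notin> (adj en (D0-{e}))\<^sup>*"
    proof
      assume uv: "(u,v) \<in> (adj en (D0 - {e}))\<^sup>*"
      have "adj en D0 \<subseteq> (adj en (D0-{e}))\<^sup>*"
      proof
        fix p assume "p \<in> adj en D0"
        then obtain x y e' where p: "p = (x,y)" "e'\<in>D0" "en e' = {x,y}" unfolding adj_def by auto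
        show "p \<in> (adj en (D0-{e}))\<^sup>*"
        proof (cases "e' = e")
          case True
          then have "{x,y} = {u,v}" using e p by simp
          then have "(x=u \<and> y=v) \<or> (x=v \<and> y=u)" by (simp add: doubleton_eq_iff)
          then show ?thesis using uv rt_sym[OF uv] p(1) by blast
        next
          case False
          then have "e' \<in> D0 - {e}" using p by simp
          then have "(x,y) \<in> adj en (D0-{e})" using p(3) by (rule adjI)
          then show ?thesis using p(1) by simp
        qed
      qed
      then have "(adj en D0)\<^sup>* \<subseteq> (adj en (D0-{e}))\<^sup>*" by (rule rtrancl_subset_rtrancl)
      then have "gconnected V en (D0 - {e})" using D0c unfolding gconnected_def by blast
      then have "D0 - {e} \<in> C" using D0D C_def by auto
      moreover have "card (D0 - {e}) < card D0" by (rule card_Diff1_less[OF finD0 e(1)])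
      ultimately show False using D0(2) by fastforce
    qed
  qed
  have "spanning_tree V en E' D0" unfolding spanning_tree_def using D0D DE D0c forest by auto
  then have "mst V en w E' \<le> ereal (sum w D0)" unfolding mst_def by (auto intro: INF_lower)
  also have "sum w D0 \<le> sum w D" using fin D0D wp by (intro sum_mono2) auto
  finally show ?thesis by simp
qed

lemma mst_anti:
  assumes "E1 \<subseteq> E2" shows "mst V en w E2 \<le> mst V en w E1"
  unfolding mst_def spanning_tree_def
  by (rule INF_superset_mono) (use assms in auto)

lemma cut_bound:
  assumes finE: "finite E" and edges: "\<forall>e\<in>E. ends e \<subseteq> V \<and> card (ends e) = 2"
    and wpos: "\<forall>e\<in>E. w e \<ge> 0"
    and Tst: "spanning_tree V ends E T" and Tm: "ereal (sum w T) = mst V ends w E"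
    and f: "f \<in> T" "crosses ends f S"
  shows "ereal (sum w T + W - w f) \<le> mst V ends w (E - partial_cut ends w E S W)"
proof (cases "W \<le> w f")
  case True
  have "ereal (sum w T + W - w f) \<le> ereal (sum w T)" using True by simp
  also have "\<dots> \<le> mst V ends w (E - partial_cut ends w E S W)" using Tm mst_anti[of "E - partial_cut ends w E S W" E] by auto
  finally show ?thesis .
next
  case False
  define C where "C = partial_cut ends w E S W"
  have TE: "T \<subseteq> E" using Tst by (simp add: spanning_tree_def)
  have fE: "f \<in> E" using f(1) TE by blast
  obtain a b where ab: "ends f = {a,b}" "a \<in> S" "b \<notin> S" using f(2) crosses_def by metis
  have abV: "a \<in> V" "b \<in> V" using edges fE ab(1) by auto
  have fC: "f \<in> C" unfolding C_def partial_cut_def using fE crosses_card[OF f(2)] False by simp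
  show ?thesis unfolding C_def[symmetric] mst_def
  proof (rule INF_greatest)
    fix T2 assume "T2 \<in> {T. spanning_tree V ends (E - C) T}"
    then have T2: "T2 \<subseteq> E - C" "gconnected V ends T2" unfolding spanning_tree_def by auto
    have finT2: "finite T2" using T2(1) finE finite_subset by blast
    have conn2: "\<forall>u\<in>V. \<forall>v\<in>V. (u,v) \<in> (adj ends T2)\<^sup>*" using T2(2) gconnected_def by metis
    obtain g where g: "g \<in> T2" "crosses ends g S"
      and gz: "\<forall>z\<in>V. (a,z) \<in> (adj ends (T2-{g}))\<^sup>* \<or> (b,z) \<in> (adj ends (T2-{g}))\<^sup>*"
      using exchange[OF conn2 abV ab(2,3)] by blast
    have gE: "g \<in> E" "g \<notin> C" using g(1) T2(1) by auto
    have wg: "W \<le> w g" using gE crosses_card[OF g(2)] unfolding C_def partial_cut_def by auto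
    define D where "D = insert f (T2 - {g})"
    have sub: "T2 - {g} \<subseteq> D" unfolding D_def by auto
    have fD: "f \<in> D" unfolding D_def by simp
    have fab1: "(a,b) \<in> adj ends D" using adjI[where en=ends, OF fD ab(1)] .
    have fab2: "(b,a) \<in> adj ends D" using adj_sym[OF fab1] .
    have Dconn: "gconnected V ends D" unfolding gconnected_def
    proof (intro ballI)
      fix u v assume uv: "u \<in> V" "v \<in> V"
      have u1: "(a,u) \<in> (adj ends D)\<^sup>* \<or> (b,u) \<in> (adj ends D)\<^sup>*"
      proof -
        have "(a,u) \<in> (adj ends (T2-{g}))\<^sup>* \<or> (b,u) \<in> (adj ends (T2-{g}))\<^sup>*" using gz uv(1) by blast
        then show ?thesis using rt_mono[where en=ends, OF sub] by metis
      qed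
      then have u2: "(u,a) \<in> (adj ends D)\<^sup>* \<or> (u,b) \<in> (adj ends D)\<^sup>*"
        using rt_sym by metis
      have v1: "(a,v) \<in> (adj ends D)\<^sup>* \<or> (b,v) \<in> (adj ends D)\<^sup>*"
      proof -
        have "(a,v) \<in> (adj ends (T2-{g}))\<^sup>* \<or> (b,v) \<in> (adj ends (T2-{g}))\<^sup>*" using gz uv(2) by blast
        then show ?thesis using rt_mono[where en=ends, OF sub] by metis
      qed
      have ab': "(a,b) \<in> (adj ends D)\<^sup>*" "(b,a) \<in> (adj ends D)\<^sup>*" using fab1 fab2 by auto
      show "(u,v) \<in> (adj ends D)\<^sup>*"
        using u2 v1 ab' by (meson rtrancl_trans)
    qed
    have finD: "finite D" using finT2 D_def by simp
    have DE: "D \<subseteq> E" using T2(1) fE D_def by auto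
    have "mst V ends w E \<le> ereal (sum w D)"
      using mst_le[OF finD DE Dconn] wpos DE by blast
    then have le: "sum w T \<le> sum w D" using Tm by (metis ereal_less_eq(3))
    have fT2: "f \<notin> T2 - {g}" using fC T2(1) by auto
    have "sum w D = w f + (sum w T2 - w g)" unfolding D_def
      using sum.insert[OF _ fT2, of w] finT2 sum_diff1[OF finT2, of w g] g(1) by simp
    then have "sum w T + W - w f \<le> sum w T2" using le wg by linarith
    then show "ereal (sum w T + W - w f) \<le> ereal (sum w T2)" by simp
  qed
qed



lemma matching:
  fixes U :: "'c set" and en :: "'e \<Rightarrow> 'c set" and D :: "'e set" and es :: "nat \<Rightarrow> 'e"
    and X :: "nat \<Rightarrow> 'c set"
  assumes conn: "gconnected U en D"
    and esU: "\<forall>i\<in>{1..n}. en (es i) \<subseteq> U"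
    and ab: "\<forall>i\<in>{1..n}. \<exists>a b. en (es i) = {a,b} \<and> X i = comp_of U en (es ` {1..<i}) a \<and> b \<notin> X i"
  shows "\<exists>\<sigma>. inj_on \<sigma> {1..n} \<and> \<sigma> ` {1..n} \<subseteq> D \<and> (\<forall>i\<in>{1..n}. crosses en (\<sigma> i) (X i))"
proof -
  have "k \<le> n \<Longrightarrow> \<exists>\<sigma>. inj_on \<sigma> {1..k} \<and> \<sigma> ` {1..k} \<subseteq> D \<and> (\<forall>i\<in>{1..k}. crosses en (\<sigma> i) (X i))
          \<and> gconnected U en ((D - \<sigma> ` {1..k}) \<union> es ` {1..k})" for k
  proof (induction k)
    case 0
    then show ?case using conn by simp
  next
    case (Suc k)
    then obtain \<sigma> where s: "inj_on \<sigma> {1..k}" "\<sigma> ` {1..k} \<subseteq> D" "\<forall>i\<in>{1..k}. crosses en (\<sigma> i) (X i)"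
      "gconnected U en ((D - \<sigma> ` {1..k}) \<union> es ` {1..k})" by auto
    define M where "M = (D - \<sigma> ` {1..k}) \<union> es ` {1..k}"
    have iN: "Suc k \<in> {1..n}" using Suc.prems by simp
    have r1: "{1..<Suc k} = {1..k}" by auto
    obtain a b where abi: "en (es (Suc k)) = {a,b}" "X (Suc k) = comp_of U en (es ` {1..k}) a" "b \<notin> X (Suc k)"
      using ab iN r1 by metis
    have "en (es (Suc k)) \<subseteq> U" using esU iN by blast
    then have aU: "a \<in> U" and bU: "b \<in> U" using abi(1) by auto
    have aX: "a \<in> X (Suc k)" using abi(2) aU unfolding comp_of_def by simp
    have connM: "\<forall>u\<in>U. \<forall>v\<in>U. (u,v) \<in> (adj en M)\<^sup>*" using s(4) unfolding M_def gconnected_def by blast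
    obtain g where g: "g \<in> M" "crosses en g (X (Suc k))"
      and gz: "\<forall>z\<in>U. (a,z) \<in> (adj en (M-{g}))\<^sup>* \<or> (b,z) \<in> (adj en (M-{g}))\<^sup>*"
      using exchange[OF connM aU bU aX abi(3)] by blast
    have gnot: "g \<notin> es ` {1..k}"
    proof
      assume "g \<in> es ` {1..k}"
      then obtain j where j: "j \<in> {1..k}" "g = es j" by blast
      obtain c d where cd: "en g = {c,d}" "c \<in> X (Suc k)" "d \<notin> X (Suc k)" using g(2) crosses_def by metis
      have jn: "j \<in> {1..n}" using j(1) Suc.prems by simp
      have "en (es j) \<subseteq> U" using esU jn by blast
      then have dU: "d \<in> U" using j(2) cd(1) by auto
      have ac: "(a,c) \<in> (adj en (es ` {1..k}))\<^sup>*" using cd(2) abi(2) unfolding comp_of_def by simp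
      have "g \<in> es ` {1..k}" using j by simp
      then have "(c,d) \<in> adj en (es ` {1..k})" using cd(1) by (rule adjI)
      then have "(a,d) \<in> (adj en (es ` {1..k}))\<^sup>*" using ac by (simp add: rtrancl.rtrancl_into_rtrancl)
      then have "d \<in> X (Suc k)" using abi(2) dU unfolding comp_of_def by simp
      then show False using cd(3) by simp
    qed
    have gD: "g \<in> D" "g \<notin> \<sigma> ` {1..k}" using g(1) gnot unfolding M_def by auto
    define \<sigma>' where "\<sigma>' = \<sigma>(Suc k := g)"
    have r2: "{1..Suc k} = insert (Suc k) {1..k}" by auto
    have img: "\<sigma>' ` {1..k} = \<sigma> ` {1..k}" unfolding \<sigma>'_def by (intro image_cong) auto
    have img2: "\<sigma>' ` {1..Suc k} = insert g (\<sigma> ` {1..k})" unfolding r2 image_insert img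
      unfolding \<sigma>'_def by simp
    have inj: "inj_on \<sigma>' {1..Suc k}" unfolding r2
    proof (rule inj_on_insert[THEN iffD2], rule conjI)
      have eqs: "\<And>x. x \<in> {1..k} \<Longrightarrow> \<sigma>' x = \<sigma> x" unfolding \<sigma>'_def by simp
      show "inj_on \<sigma>' {1..k}" using inj_on_cong[of "{1..k}" \<sigma>' \<sigma>] eqs s(1) by blast
      have e1: "\<sigma>' (Suc k) = g" unfolding \<sigma>'_def by simp
      have e2: "{1..k} - {Suc k} = {1..k}" by auto
      show "\<sigma>' (Suc k) \<notin> \<sigma>' ` ({1..k} - {Suc k})" unfolding e1 e2 img using gD(2) .
    qed
    have sub: "\<sigma>' ` {1..Suc k} \<subseteq> D" using img2 gD s(2) by simp
    have cr: "\<forall>i\<in>{1..Suc k}. crosses en (\<sigma>' i) (X i)"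
      using s(3) g(2) unfolding r2 \<sigma>'_def by simp
    define M' where "M' = (D - \<sigma>' ` {1..Suc k}) \<union> es ` {1..Suc k}"
    have esub: "es ` {1..k} \<subseteq> es ` {1..Suc k}" by auto
    have MM: "M - {g} \<subseteq> M'" unfolding M_def M'_def img2 using esub by auto
    have eM: "es (Suc k) \<in> M'" unfolding M'_def by simp
    have ab1: "(a,b) \<in> adj en M'" using adjI[where en=en, OF eM abi(1)] .
    have ab2: "(b,a) \<in> adj en M'" using adj_sym[OF ab1] .
    have ab': "(a,b) \<in> (adj en M')\<^sup>*" "(b,a) \<in> (adj en M')\<^sup>*" using ab1 ab2 by auto
    have connM': "gconnected U en M'" unfolding gconnected_def
    proof (intro ballI)
      fix u v assume uv: "u \<in> U" "v \<in> U"
      have u1: "(a,u) \<in> (adj en M')\<^sup>* \<or> (b,u) \<in> (adj en M')\<^sup>*"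
      proof -
        have "(a,u) \<in> (adj en (M-{g}))\<^sup>* \<or> (b,u) \<in> (adj en (M-{g}))\<^sup>*" using gz uv(1) by blast
        then show ?thesis using rt_mono[where en=en, OF MM] by metis
      qed
      then have u2: "(u,a) \<in> (adj en M')\<^sup>* \<or> (u,b) \<in> (adj en M')\<^sup>*"
        using rt_sym by metis
      have v1: "(a,v) \<in> (adj en M')\<^sup>* \<or> (b,v) \<in> (adj en M')\<^sup>*"
      proof -
        have "(a,v) \<in> (adj en (M-{g}))\<^sup>* \<or> (b,v) \<in> (adj en (M-{g}))\<^sup>*" using gz uv(2) by blast
        then show ?thesis using rt_mono[where en=en, OF MM] by metis
      qed
      show "(u,v) \<in> (adj en M')\<^sup>*"
        using u2 v1 ab' by (meson rtrancl_trans)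
    qed
    show ?case using inj sub cr connM' unfolding M'_def by blast
  qed
  then show ?thesis by blast
qed



theorem mainTheorem14:
  fixes V :: "'v set" and E :: "'e set" and ends :: "'e \<Rightarrow> 'v set"
    and w :: "'e \<Rightarrow> real" and F T Tcc :: "'e set" and t :: nat
    and es :: "nat \<Rightarrow> 'e" and L R :: "nat \<Rightarrow> 'v set set"
  assumes finV: "finite V" and finE: "finite E"
    and edges: "\<forall>e\<in>E. ends e \<subseteq> V \<and> card (ends e) = 2"
    and wpos: "\<forall>e\<in>E. w e \<ge> 0"
    and Gconn: "gconnected V ends E"
    and FE: "F \<subseteq> E"
    and G'conn: "gconnected V ends (E - F)"
    and Tmst: "spanning_tree V ends E T" "ereal (sum w T) = mst V ends w E"
    and tdef: "card (T \<inter> F) = t - 1" and t2: "t \<ge> 2"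
    and Tccmst: "spanning_tree (comp_of V ends (T - F) ` V)
                   (\<lambda>e. comp_of V ends (T - F) ` ends e) (E - F) Tcc"
      "ereal (sum w Tcc) = mst (comp_of V ends (T - F) ` V)
                   (\<lambda>e. comp_of V ends (T - F) ` ends e) w (E - F)"
    and es_bij: "bij_betw es {1..t-1} Tcc"
    and es_sorted: "\<forall>i j. 1 \<le> i \<and> i \<le> j \<and> j \<le> t - 1 \<longrightarrow> w (es i) \<le> w (es j)"
    and LR: "\<forall>i\<in>{1..t-1}. \<exists>a b.
               comp_of V ends (T - F) ` ends (es i) = {a, b} \<and>
               L i = comp_of (comp_of V ends (T - F) ` V)
                       (\<lambda>e. comp_of V ends (T - F) ` ends e) (es ` {1..<i}) a \<and>
               R i = comp_of (comp_of V ends (T - F) ` V)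
                       (\<lambda>e. comp_of V ends (T - F) ` ends e) (es ` {1..<i}) b"
  shows "(\<Sum>i\<in>{1..t-1}. profit V ends w E
            (partial_cut ends w E (\<Union> (Xsel L R i)) (w (es i))))
         \<ge> mst V ends w (E - F) - mst V ends w E"
proof -
  define cmp where "cmp = comp_of V ends (T - F)"
  define Vc where "Vc = cmp ` V"
  define endc where "endc = (\<lambda>e. cmp ` ends e)"
  define I where "I = {1..t-1}"
  have TE: "T \<subseteq> E" and Tconn: "gconnected V ends T" using Tmst(1) by (simp_all add: spanning_tree_def)
  have Tcc: "spanning_tree Vc endc (E - F) Tcc" using Tccmst(1) unfolding Vc_def endc_def cmp_def .
  have TccE: "Tcc \<subseteq> E - F" and Tccconn: "gconnected Vc endc Tcc" and Tccfor: "gforest endc Tcc"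
    using Tcc by (simp_all add: spanning_tree_def)
  have finT: "finite T" using TE finE finite_subset by blast
  have finTcc: "finite Tcc" using TccE finE finite_subset by blast
  have cmp_self: "x \<in> cmp x" if h: "x \<in> V" for x using h unfolding cmp_def comp_of_def by simp
  have cmp_eq: "cmp y = cmp x" if h: "x \<in> V" "y \<in> cmp x" for x y
  proof -
    have xy: "(x,y) \<in> (adj ends (T-F))\<^sup>*" using h(2) unfolding cmp_def comp_of_def by simp
    have yx: "(y,x) \<in> (adj ends (T-F))\<^sup>*" using rt_sym[OF xy] .
    show ?thesis unfolding cmp_def comp_of_def using xy yx by (meson rtrancl_trans)
  qed
  have cmp_rel: "(x,y) \<in> (adj ends (T-F))\<^sup>*" if h: "y \<in> cmp x" for x y
    using h unfolding cmp_def comp_of_def by simp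
  have cmpV: "y \<in> V" if h: "y \<in> cmp x" for x y using h unfolding cmp_def comp_of_def by simp
  have cmp_mem: "A = cmp x" if hA: "A \<in> Vc" "x \<in> A" for A x
  proof -
    obtain u where u: "u \<in> V" "A = cmp u" using hA(1) Vc_def by blast
    show ?thesis using cmp_eq[OF u(1)] hA(2) u(2) by simp
  qed
  have endc_sub: "endc e \<subseteq> Vc" if h: "e \<in> E" for e using h edges unfolding endc_def Vc_def by auto
  have ends2: "\<exists>p q. ends e = {p,q} \<and> p \<noteq> q \<and> p \<in> V \<and> q \<in> V" if h: "e \<in> E" for e
  proof -
    have "card (ends e) = 2" "ends e \<subseteq> V" using edges h by auto
    then show ?thesis by (metis card_2_iff insert_subset)
  qed
  have endc_pq: "endc e = {cmp p, cmp q}" if h: "ends e = {p,q}" for e p q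
    unfolding endc_def h by simp

  have inU: "x \<in> \<Union> X \<longleftrightarrow> cmp x \<in> X" if h: "x \<in> V" "X \<subseteq> Vc" for x X
  proof
    assume "x \<in> \<Union> X"
    then obtain A where "A \<in> X" "x \<in> A" by blast
    then show "cmp x \<in> X" using cmp_mem h(2) by blast
  next
    assume "cmp x \<in> X" then show "x \<in> \<Union> X" using cmp_self[OF h(1)] by blast
  qed
  have transl: "crosses ends f (\<Union> X)" if h: "f \<in> E" "X \<subseteq> Vc" "crosses endc f X" for f X
  proof -
    obtain c d where cd: "endc f = {c,d}" "c \<in> X" "d \<notin> X" using h(3) crosses_def by metis
    obtain p q where pq: "ends f = {p,q}" "p \<in> V" "q \<in> V" using ends2[OF h(1)] by blast
    have "{cmp p, cmp q} = {c,d}" using endc_pq[OF pq(1)] cd(1) by simp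
    then have "(cmp p = c \<and> cmp q = d) \<or> (cmp p = d \<and> cmp q = c)" by (simp add: doubleton_eq_iff)
    then show ?thesis
    proof
      assume hh: "cmp p = c \<and> cmp q = d"
      have "p \<in> \<Union> X" "q \<notin> \<Union> X" using inU[OF pq(2) h(2)] inU[OF pq(3) h(2)] hh cd by auto
      then show ?thesis unfolding crosses_def using pq(1) by blast
    next
      assume hh: "cmp p = d \<and> cmp q = c"
      have "q \<in> \<Union> X" "p \<notin> \<Union> X" using inU[OF pq(2) h(2)] inU[OF pq(3) h(2)] hh cd by auto
      moreover have "ends f = {q,p}" using pq(1) by auto
      ultimately show ?thesis unfolding crosses_def by blast
    qed
  qed

  have contr: "(cmp u, cmp z) \<in> (adj endc (T \<inter> F))\<^sup>*" if h: "(u,z) \<in> (adj ends T)\<^sup>*" "u \<in> V" for u z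
    using h(1)
  proof (induction rule: rtrancl_induct)
    case base then show ?case by simp
  next
    case (step y z)
    from step.hyps(2) obtain e where e: "e \<in> T" "ends e = {y,z}" unfolding adj_def by auto
    have eE: "e \<in> E" using e(1) TE by blast
    have yzV: "y \<in> V" "z \<in> V" using edges eE e(2) by auto
    show ?case
    proof (cases "e \<in> F")
      case True
      then have "e \<in> T \<inter> F" using e(1) by simp
      then have "(cmp y, cmp z) \<in> adj endc (T \<inter> F)" using endc_pq[OF e(2)] by (rule adjI)
      then show ?thesis using step.IH by (simp add: rtrancl.rtrancl_into_rtrancl)
    next
      case False
      then have "e \<in> T - F" using e(1) by simp
      then have "(y,z) \<in> adj ends (T - F)" using e(2) by (rule adjI)
      then have "z \<in> cmp y" unfolding cmp_def comp_of_def using yzV by simp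
      then have "cmp z = cmp y" using cmp_eq[OF yzV(1)] by simp
      then show ?thesis using step.IH by simp
    qed
  qed
  have connTF: "gconnected Vc endc (T \<inter> F)" unfolding gconnected_def
  proof (intro ballI)
    fix A B assume "A \<in> Vc" "B \<in> Vc"
    then obtain u v where uv: "u \<in> V" "v \<in> V" "A = cmp u" "B = cmp v" unfolding Vc_def by blast
    have "(u,v) \<in> (adj ends T)\<^sup>*" using Tconn uv unfolding gconnected_def by blast
    then show "(A,B) \<in> (adj endc (T \<inter> F))\<^sup>*" using contr[OF _ uv(1)] uv(3,4) by simp
  qed

  define X where "X = (\<lambda>i. Xsel L R i)"
  have Xc: "X i = L i \<or> X i = R i" for i unfolding X_def Xsel_def Let_def by auto
  have es_in: "es i \<in> Tcc" if h: "i \<in> I" for i using es_bij h unfolding I_def bij_betw_def by blast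
  have es_inj: "inj_on es I" using es_bij unfolding I_def bij_betw_def by blast
  have esU: "\<forall>i\<in>I. endc (es i) \<subseteq> Vc" using es_in TccE endc_sub by blast
  have LR': "\<forall>i\<in>I. \<exists>a b. endc (es i) = {a, b} \<and> L i = comp_of Vc endc (es ` {1..<i}) a \<and> R i = comp_of Vc endc (es ` {1..<i}) b"
    using LR unfolding I_def Vc_def endc_def cmp_def .
  have abX: "\<forall>i\<in>I. \<exists>a b. endc (es i) = {a,b} \<and> X i = comp_of Vc endc (es ` {1..<i}) a \<and> b \<notin> X i"
  proof
    fix i assume iI: "i \<in> I"
    obtain a b where ab: "endc (es i) = {a,b}" "L i = comp_of Vc endc (es ` {1..<i}) a"
      "R i = comp_of Vc endc (es ` {1..<i}) b"
      using bspec[OF LR' iI] by blast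
    have nab: "(a,b) \<notin> (adj endc (Tcc - {es i}))\<^sup>*"
      using bspec[OF Tccfor[unfolded gforest_def] es_in[OF iI]] ab(1) by blast
    have sub: "es ` {1..<i} \<subseteq> Tcc - {es i}"
    proof
      fix x assume "x \<in> es ` {1..<i}"
      then obtain j where j: "j \<in> {1..<i}" "x = es j" by blast
      have jI: "j \<in> I" using j(1) iI unfolding I_def by auto
      have "es j \<noteq> es i" using es_inj jI iI j(1) unfolding inj_on_def by force
      then show "x \<in> Tcc - {es i}" using es_in[OF jI] j(2) by simp
    qed
    have n1: "(a,b) \<notin> (adj endc (es ` {1..<i}))\<^sup>*"
    proof
      assume "(a,b) \<in> (adj endc (es ` {1..<i}))\<^sup>*"
      from rt_mono[OF sub this] nab show False by simp
    qed
    have n2: "(b,a) \<notin> (adj endc (es ` {1..<i}))\<^sup>*"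
    proof
      assume "(b,a) \<in> (adj endc (es ` {1..<i}))\<^sup>*"
      from rt_sym[OF this] n1 show False by simp
    qed
    have bL: "b \<notin> L i" using n1 ab(2) unfolding comp_of_def by simp
    have aR: "a \<notin> R i" using n2 ab(3) unfolding comp_of_def by simp
    from Xc[of i] show "\<exists>a b. endc (es i) = {a,b} \<and> X i = comp_of Vc endc (es ` {1..<i}) a \<and> b \<notin> X i"
    proof
      assume xl: "X i = L i"
      show ?thesis apply (rule exI[of _ a], rule exI[of _ b]) using ab(1,2) bL xl by simp
    next
      assume xr: "X i = R i"
      have ba: "endc (es i) = {b,a}" using ab(1) by auto
      show ?thesis apply (rule exI[of _ b], rule exI[of _ a]) using ba ab(3) aR xr by simp
    qed
  qed
  obtain \<sigma> where sg: "inj_on \<sigma> I" "\<sigma> ` I \<subseteq> T \<inter> F" "\<forall>i\<in>I. crosses endc (\<sigma> i) (X i)"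
    using matching[OF connTF esU[unfolded I_def] abX[unfolded I_def]] unfolding I_def by blast
  have XVc: "X i \<subseteq> Vc" if h: "i \<in> I" for i
  proof -
    from bspec[OF LR' h] obtain a b where ab: "L i = comp_of Vc endc (es ` {1..<i}) a"
      "R i = comp_of Vc endc (es ` {1..<i}) b" by blast
    show ?thesis using Xc[of i] ab unfolding comp_of_def by auto
  qed
  have bound: "ereal (w (es i) - w (\<sigma> i)) \<le> profit V ends w E (partial_cut ends w E (\<Union> (Xsel L R i)) (w (es i)))"
    if h: "i \<in> I" for i
  proof -
    have sT: "\<sigma> i \<in> T" "\<sigma> i \<in> E" using sg(2) h TE by auto
    have cr0: "crosses endc (\<sigma> i) (X i)" using sg(3) h by blast
    have cr: "crosses ends (\<sigma> i) (\<Union> (X i))" using transl[OF sT(2) XVc[OF h] cr0] .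
    have cb: "ereal (sum w T + w (es i) - w (\<sigma> i)) \<le> mst V ends w (E - partial_cut ends w E (\<Union> (X i)) (w (es i)))"
      using cut_bound[OF finE edges wpos Tmst(1) Tmst(2) sT(1) cr] .
    have "ereal (w (es i) - w (\<sigma> i)) = ereal (sum w T + w (es i) - w (\<sigma> i)) - ereal (sum w T)" by simp
    also have "\<dots> \<le> mst V ends w (E - partial_cut ends w E (\<Union> (X i)) (w (es i))) - ereal (sum w T)"
      using ereal_minus_mono[OF cb order_refl] .
    also have "\<dots> = profit V ends w E (partial_cut ends w E (\<Union> (X i)) (w (es i)))"
      unfolding profit_def using Tmst(2) by simp
    finally show ?thesis unfolding X_def .
  qed
  have S1: "(\<Sum>i\<in>I. ereal (w (es i) - w (\<sigma> i))) \<le>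
      (\<Sum>i\<in>I. profit V ends w E (partial_cut ends w E (\<Union> (Xsel L R i)) (w (es i))))"
    by (rule sum_mono) (rule bound)
  have finI: "finite I" unfolding I_def by simp
  have r1: "(\<Sum>i\<in>I. w (es i)) = sum w Tcc" using sum.reindex_bij_betw[OF es_bij, of w] unfolding I_def .
  have r2: "(\<Sum>i\<in>I. w (\<sigma> i)) = sum w (\<sigma> ` I)" using sum.reindex[OF sg(1), of w] by simp
  have S2: "(\<Sum>i\<in>I. ereal (w (es i) - w (\<sigma> i))) = ereal (sum w Tcc - sum w (\<sigma> ` I))"
    unfolding sum_ereal sum_subtractf r1 r2 ..
  have finTF: "finite (T \<inter> F)" using finT by simp
  have S3: "sum w (\<sigma> ` I) \<le> sum w (T \<inter> F)"
    using sum_mono2[OF finTF sg(2), of w] wpos TE by force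
  have lift: "\<forall>y\<in>B. (u,y) \<in> (adj ends ((T-F) \<union> Tcc))\<^sup>*" if h: "(cmp u, B) \<in> (adj endc Tcc)\<^sup>*" "u \<in> V" for u B
    using h(1)
  proof (induction rule: rtrancl_induct)
    case base
    show ?case
    proof
      fix y assume "y \<in> cmp u"
      then have "(u,y) \<in> (adj ends (T-F))\<^sup>*" by (rule cmp_rel)
      then show "(u,y) \<in> (adj ends ((T-F) \<union> Tcc))\<^sup>*" by (rule rt_mono[rotated]) auto
    qed
  next
    case (step B B')
    from step.hyps(2) obtain e where e: "e \<in> Tcc" "endc e = {B,B'}" unfolding adj_def by auto
    have eE: "e \<in> E" using e(1) TccE by blast
    obtain p q where pq: "ends e = {p,q}" "p \<in> V" "q \<in> V" using ends2[OF eE] by blast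
    have eU: "e \<in> (T-F) \<union> Tcc" using e(1) by simp
    have "{cmp p, cmp q} = {B,B'}" using endc_pq[OF pq(1)] e(2) by simp
    then have cs: "(cmp p = B \<and> cmp q = B') \<or> (cmp p = B' \<and> cmp q = B)" by (simp add: doubleton_eq_iff)
    show ?case
    proof
      fix y assume y: "y \<in> B'"
      from cs show "(u,y) \<in> (adj ends ((T-F) \<union> Tcc))\<^sup>*"
      proof
        assume hh: "cmp p = B \<and> cmp q = B'"
        have up: "(u,p) \<in> (adj ends ((T-F) \<union> Tcc))\<^sup>*" using step.IH cmp_self[OF pq(2)] hh by blast
        have pqa: "(p,q) \<in> adj ends ((T-F) \<union> Tcc)" using eU pq(1) by (rule adjI)
        have "y \<in> cmp q" using y hh by simp
        then have "(q,y) \<in> (adj ends (T-F))\<^sup>*" by (rule cmp_rel)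
        then have qy: "(q,y) \<in> (adj ends ((T-F) \<union> Tcc))\<^sup>*" by (rule rt_mono[rotated]) auto
        show ?thesis using up pqa qy by (meson rtrancl.rtrancl_into_rtrancl rtrancl_trans)
      next
        assume hh: "cmp p = B' \<and> cmp q = B"
        have up: "(u,q) \<in> (adj ends ((T-F) \<union> Tcc))\<^sup>*" using step.IH cmp_self[OF pq(3)] hh by blast
        have qp: "ends e = {q,p}" using pq(1) by auto
        have pqa: "(q,p) \<in> adj ends ((T-F) \<union> Tcc)" using eU qp by (rule adjI)
        have "y \<in> cmp p" using y hh by simp
        then have "(p,y) \<in> (adj ends (T-F))\<^sup>*" by (rule cmp_rel)
        then have qy: "(p,y) \<in> (adj ends ((T-F) \<union> Tcc))\<^sup>*" by (rule rt_mono[rotated]) auto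
        show ?thesis using up pqa qy by (meson rtrancl.rtrancl_into_rtrancl rtrancl_trans)
      qed
    qed
  qed
  have D1: "gconnected V ends ((T-F) \<union> Tcc)" unfolding gconnected_def
  proof (intro ballI)
    fix u v assume uv: "u \<in> V" "v \<in> V"
    have "cmp u \<in> Vc" "cmp v \<in> Vc" using uv Vc_def by auto
    then have "(cmp u, cmp v) \<in> (adj endc Tcc)\<^sup>*" using Tccconn unfolding gconnected_def by blast
    from lift[OF this uv(1)] cmp_self[OF uv(2)] show "(u,v) \<in> (adj ends ((T-F) \<union> Tcc))\<^sup>*" by blast
  qed
  have finU: "finite ((T-F) \<union> Tcc)" using finT finTcc by simp
  have subU: "(T-F) \<union> Tcc \<subseteq> E - F" using TE TccE by auto
  have nnU: "\<forall>e\<in>(T-F) \<union> Tcc. w e \<ge> 0" using subU wpos by auto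
  have mstF: "mst V ends w (E - F) \<le> ereal (sum w ((T-F) \<union> Tcc))" using mst_le[OF finU subU D1 nnU] .
  have finTmF: "finite (T-F)" using finT by simp
  have "sum w ((T-F) \<union> Tcc) = sum w (T-F) + sum w Tcc - sum w ((T-F) \<inter> Tcc)"
    using sum_Un[OF finTmF finTcc] .
  moreover have "sum w ((T-F) \<inter> Tcc) \<ge> 0" using nnU by (intro sum_nonneg) auto
  ultimately have U1: "sum w ((T-F) \<union> Tcc) \<le> sum w (T-F) + sum w Tcc" by linarith
  have U2: "sum w T = sum w (T \<inter> F) + sum w (T - F)" using sum.Int_Diff[OF finT] .
  have "mst V ends w (E - F) - mst V ends w E \<le> ereal (sum w ((T-F) \<union> Tcc)) - ereal (sum w T)"
    using ereal_minus_mono[OF mstF order_refl] Tmst(2) by simp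
  also have "\<dots> \<le> ereal (sum w Tcc - sum w (\<sigma> ` I))" using U1 U2 S3 by simp
  also have "\<dots> = (\<Sum>i\<in>I. ereal (w (es i) - w (\<sigma> i)))" using S2 by simp
  also have "\<dots> \<le> (\<Sum>i\<in>I. profit V ends w E (partial_cut ends w E (\<Union> (Xsel L R i)) (w (es i))))" by (rule S1)
  finally show ?thesis unfolding I_def .
qed


end
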